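(* Let $k$ be a squarefree positive integer with at most two distinct prime factors. Then every $n\in\mathbb N$ with $\kappa(n)=k$ satisfies $h(\Phi^*_n)=1$; that is, $\{h(\Phi^*_n):\kappa(n)=k\}=\{1\}$.
   Context: $d\mid\mid n$ means $d\mid n$ and $\gcd(d,n/d)=1$; $(j,n)_*=\max\{d: d\mid j,\ d\mid\mid n\}$; $\Phi^*_n(x)=\prod_{1\le j\le n,\ (j,n)_*=1}(x-e^{2\pi i j/n})$ (a polynomial with integer coefficients). $\kappa(n)=\prod_{p\mid n}p$ is the squarefree kernel. The height $h(f)$ of a polynomial $f$ is the maximum absolute value of its coefficients. *)

theory Defs
  imports Complex_Main "HOL-Computational_Algebra.Computational_Algebra"
begin

definition unitary_dvd :: "nat \<Rightarrow> nat \<Rightarrow> bool" where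
  "unitary_dvd d n \<longleftrightarrow> d dvd n \<and> coprime d (n div d)"

definition unitary_gcd :: "nat \<Rightarrow> nat \<Rightarrow> nat" where
  "unitary_gcd j n = Max {d. d dvd j \<and> unitary_dvd d n}"

definition unitary_cyclotomic :: "nat \<Rightarrow> complex poly" where
  "unitary_cyclotomic n =
     (\<Prod>j\<in>{j. 1 \<le> j \<and> j \<le> n \<and> unitary_gcd j n = 1}.
        [:- exp (2 * of_real pi * \<i> * of_nat j / of_nat n), 1:])"

definition kappa :: "nat \<Rightarrow> nat" where
  "kappa n = \<Prod>(prime_factors n)"

definition height :: "complex poly \<Rightarrow> real" where
  "height f = Max {norm (coeff f i) | i. i \<le> degree f}"

end

theory Submission imports Defs "HOL-Analysis.Complex_Transcendental"
begin

definition om :: "nat \<Rightarrow> nat \<Rightarrow> complex" where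
  "om m j = exp (2 * of_real pi * \<i> * of_nat j / of_nat m)"

lemma prod_roots_dvd:
  fixes p :: "complex poly"
  assumes "finite R" "\<forall>r\<in>R. poly p r = 0"
  shows "(\<Prod>r\<in>R. [:-r,1:]) dvd p"
  using assms
proof (induction R rule: finite_induct)
  case empty then show ?case by simp
next
  case (insert r R)
  then obtain s where s: "p = (\<Prod>r\<in>R. [:-r,1:]) * s" by (auto elim: dvdE)
  have "poly (\<Prod>r\<in>R. [:-r,1:]) r \<noteq> 0"
    using insert(2) by (auto simp: poly_prod insert(1))
  moreover have "poly p r = 0" using insert by auto
  ultimately have "poly s r = 0" using s by simp
  then have "[:-r,1:] dvd s" by (simp add: poly_eq_0_iff_dvd)
  then have "[:-r,1:] * (\<Prod>r\<in>R. [:-r,1:]) dvd s * (\<Prod>r\<in>R. [:-r,1:])"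
    by (rule mult_dvd_mono) simp
  then show ?case using s insert(1,2) by (simp add: mult.commute)
qed

lemma om_inj: "m > 0 \<Longrightarrow> inj_on (om m) {1..m}"
  unfolding inj_on_def om_def
proof (intro ballI impI)
  fix j k assume m: "m > 0" and j: "j \<in> {1..m}" and k: "k \<in> {1..m}" and
    e: "exp (2 * of_real pi * \<i> * of_nat j / of_nat m) = exp (2 * of_real pi * \<i> * of_nat k / of_nat m)"
  then have "j mod m = k mod m" using complex_root_unity_eq[of m j k] by simp
  then show "j = k" using j k
    by (metis atLeastAtMost_iff le_neq_implies_less mod_less mod_self nat_less_le
        not_gr_zero not_one_le_zero)
qed

lemma root_prod:
  assumes m: "m > 0"
  shows "(\<Prod>j\<in>{1..m}. [:-om m j,1:]) = monom 1 m - 1"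
proof -
  let ?Q = "(\<Prod>j\<in>{1..m}. [:-om m j,1:])"
  have Q: "?Q = (\<Prod>r\<in>om m ` {1..m}. [:-r,1:])"
    using prod.reindex[OF om_inj[OF m], of "\<lambda>r. [:-r,1:]"] by simp
  have "?Q dvd monom 1 m - 1" unfolding Q
    by (rule prod_roots_dvd) (auto simp: om_def poly_monom complex_root_unity m)
  then obtain s where s: "monom 1 m - 1 = ?Q * s" by (auto elim: dvdE)
  have dQ: "degree ?Q = m"
    by (subst degree_prod_eq_sum_degree) auto
  have lQ: "lead_coeff ?Q = 1" by (simp add: lead_coeff_prod)
  have dP: "degree (monom 1 m - 1 :: complex poly) = m"
  proof (rule antisym)
    show "degree (monom 1 m - 1 :: complex poly) \<le> m"
      by (rule degree_diff_le) (auto simp: degree_monom_eq)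
    show "m \<le> degree (monom 1 m - 1 :: complex poly)"
      by (rule le_degree) (use m in auto)
  qed
  have "monom 1 m - 1 \<noteq> (0::complex poly)" using dP m by auto
  then have s0: "s \<noteq> 0" using s by auto
  have Q0: "?Q \<noteq> 0" using lQ by auto
  have "degree s = 0" using degree_mult_eq[OF Q0 s0] dP dQ s by simp
  moreover have "lead_coeff (monom 1 m - 1 :: complex poly) = 1" using dP m by simp
  then have "lead_coeff s = 1" using s lead_coeff_mult[of ?Q s] lQ by simp
  ultimately have "s = 1" by (metis coeff_pCons_0 lead_coeff_1 one_pCons pCons_0_0 degree_0_id)
  then show ?thesis using s by simp
qed


lemma ppow_unitary:
  assumes n: "n > 0" and p: "p \<in> prime_factors n"
  shows "unitary_dvd (p ^ multiplicity p n) n"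
proof -
  have pr: "prime p" using p by auto
  have "\<not> p dvd (n div p ^ multiplicity p n)" by (rule multiplicity_decompose) (use n pr in auto)
  then have "coprime p (n div p ^ multiplicity p n)" using pr
    by (simp add: prime_imp_coprime)
  then show ?thesis unfolding unitary_dvd_def
    by (simp add: multiplicity_dvd)
qed

lemma unitary_has_ppow:
  assumes n: "n > 0" and d: "unitary_dvd d n" and pr: "prime p" and pd: "p dvd d"
  shows "p ^ multiplicity p n dvd d"
proof -
  from d have dn: "d dvd n" and cop: "coprime d (n div d)" by (auto simp: unitary_dvd_def)
  define e where "e = n div d"
  have ne: "n = d * e" using dn by (simp add: e_def)
  have d0: "d \<noteq> 0" "e \<noteq> 0" using ne n by auto
  have "\<not> p dvd e"
  proof
    assume "p dvd e"
    then have "p dvd gcd d e" using pd by simp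
    then show False using cop pr by (simp add: e_def)
  qed
  then have "multiplicity p e = 0" by (simp add: not_dvd_imp_multiplicity_0)
  then have "multiplicity p n = multiplicity p d"
    using ne prime_elem_multiplicity_mult_distrib[of p d e] d0 pr by simp
  then show ?thesis by (simp add: multiplicity_dvd)
qed

lemma ugcd_char:
  assumes n: "n > 0"
  shows "unitary_gcd j n = 1 \<longleftrightarrow> (\<forall>p\<in>prime_factors n. \<not> p ^ multiplicity p n dvd j)"
proof -
  let ?S = "{d. d dvd j \<and> unitary_dvd d n}"
  have fin: "finite ?S"
    by (rule finite_subset[of _ "{d. d dvd n}"]) (use n in \<open>auto simp: unitary_dvd_def\<close>)
  have one: "1 \<in> ?S" by (simp add: unitary_dvd_def)
  have "unitary_gcd j n = 1 \<longleftrightarrow> (\<forall>d\<in>?S. d \<le> 1)"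
    unfolding unitary_gcd_def using fin one
    by (metis (no_types, lifting) Max_ge Max_in empty_iff le_antisym)
  also have "\<dots> \<longleftrightarrow> (\<forall>p\<in>prime_factors n. \<not> p ^ multiplicity p n dvd j)"
  proof
    assume H: "\<forall>d\<in>?S. d \<le> 1"
    show "\<forall>p\<in>prime_factors n. \<not> p ^ multiplicity p n dvd j"
    proof (intro ballI notI)
      fix p assume p: "p \<in> prime_factors n" and dv: "p ^ multiplicity p n dvd j"
      have "p ^ multiplicity p n \<in> ?S" using ppow_unitary[OF n p] dv by simp
      then have "p ^ multiplicity p n \<le> 1" using H by blast
      moreover have "multiplicity p n > 0" using p n
        by (auto simp: in_prime_factors_iff prime_multiplicity_gt_zero_iff)
      moreover have "p > 1" using p prime_gt_1_nat by (auto simp: in_prime_factors_iff)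
      ultimately show False
        using one_less_power[of p "multiplicity p n"] by linarith
    qed
  next
    assume H: "\<forall>p\<in>prime_factors n. \<not> p ^ multiplicity p n dvd j"
    show "\<forall>d\<in>?S. d \<le> 1"
    proof (rule ccontr)
      assume "\<not> (\<forall>d\<in>?S. d \<le> 1)"
      then obtain d where d: "d dvd j" "unitary_dvd d n" "d > 1" by auto
      then obtain p where pr: "prime p" and pd: "p dvd d"
        using prime_factor_nat[of d] by auto
      have "d dvd n" using d by (simp add: unitary_dvd_def)
      then have "p \<in> prime_factors n" using pr pd n
        by (auto simp: in_prime_factors_iff intro: dvd_trans)
      moreover have "p ^ multiplicity p n dvd j"
        using unitary_has_ppow[OF n d(2) pr pd] d(1) by (rule dvd_trans)
      ultimately show False using H by blast
    qed
  qed
  finally show ?thesis .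
qed


abbreviation lin :: "nat \<Rightarrow> nat \<Rightarrow> complex poly" where
  "lin n j \<equiv> [:-om n j, 1:]"

lemma sub_prod:
  assumes "A * B = n" "A > 0" "B > 0"
  shows "(\<Prod>j\<in>{j\<in>{1..n}. A dvd j}. lin n j) = monom 1 B - 1"
proof -
  have inj: "inj_on (\<lambda>t. A * t) {1..B}" using assms by (auto simp: inj_on_def)
  have im: "(\<lambda>t. A * t) ` {1..B} = {j\<in>{1..n}. A dvd j}"
  proof safe
    fix j assume "j \<in> {1..n}" "A dvd j"
    then obtain t where t: "j = A * t" by (auto elim: dvdE)
    then have "t \<in> {1..B}" using \<open>j \<in> {1..n}\<close> assms by auto
    then show "j \<in> (\<lambda>t. A * t) ` {1..B}" using t by blast
  qed (use assms in auto)
  have "(\<Prod>j\<in>{j\<in>{1..n}. A dvd j}. lin n j) = (\<Prod>t\<in>{1..B}. lin n (A * t))"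
    using prod.reindex[OF inj, of "lin n"] im by simp
  also have "\<dots> = (\<Prod>t\<in>{1..B}. lin B t)"
  proof (rule prod.cong)
    fix t
    have "om n (A * t) = om B t" unfolding om_def using assms
      by (auto simp: field_simps)
    then show "lin n (A * t) = lin B t" by simp
  qed simp
  also have "\<dots> = monom 1 B - 1" using root_prod assms by simp
  finally show ?thesis .
qed

lemma om_self: "n > 0 \<Longrightarrow> om n n = 1"
  unfolding om_def by simp

lemma geom:
  "(monom 1 A - 1) * (\<Sum>i<B. monom 1 (A*i)) = (monom 1 (A*B) - 1 :: complex poly)"
proof (induction B)
  case 0 then show ?case by simp
next
  case (Suc B)
  have "(monom 1 A - 1) * (\<Sum>i<Suc B. monom 1 (A*i)) =
        (monom 1 A - 1) * (\<Sum>i<B. monom 1 (A*i)) + (monom 1 A - 1) * (monom 1 (A*B) :: complex poly)"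
    by (simp add: distrib_left)
  also have "\<dots> = (monom 1 (A*B) - 1) + (monom 1 A - 1) * monom 1 (A*B)"
    using Suc.IH by simp
  also have "\<dots> = monom 1 (A * Suc B) - 1"
    by (simp add: algebra_simps mult_monom)
  finally show ?case .
qed

lemma lin1: "[:-1,1:] = (monom 1 1 - 1 :: complex poly)"
  by (rule poly_eqI) (auto simp: coeff_monom coeff_pCons split: nat.splits)


lemma coeffG:
  assumes "A > 0"
  shows "coeff (\<Sum>i<B. monom (1::complex) (A*i)) t = (if A dvd t \<and> t < A*B then 1 else 0)"
proof -
  have "coeff (\<Sum>i<B. monom (1::complex) (A*i)) t = (\<Sum>i<B. if A*i = t then 1 else 0)"
    by (simp add: coeff_sum coeff_monom)
  also have "\<dots> = (\<Sum>i<B. if i = t div A \<and> A dvd t then 1 else 0)"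
    by (rule sum.cong) (use assms in auto)
  also have "\<dots> = (if A dvd t \<and> t < A*B then 1 else 0)"
  proof (cases "A dvd t")
    case True
    then have "(t div A < B) = (t < A*B)" using assms
      by (metis dvd_mult_div_cancel mult_less_cancel1)
    then show ?thesis using True by (simp add: sum.delta)
  qed simp
  finally show ?thesis .
qed

lemma uniq_k:
  fixes A B m s k1 k2 :: nat
  assumes cop: "coprime A B" and B: "B > 0" and m: "m < A*B"
    and k: "k1 \<le> m div B" "k2 \<le> m div B"
    and d: "A dvd (m - k1*B - s)" "A dvd (m - k2*B - s)"
    and l: "k1*B + s \<le> m" "k2*B + s \<le> m"
  shows "k1 = k2"
proof -
  have mb: "m div B < A" using m B
    by (simp add: div_less_iff_less_mult mult.commute)
  have main: "k1 = k2" if "k1 \<le> k2" "A dvd (m - k1*B - s)" "A dvd (m - k2*B - s)"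
    "k2*B + s \<le> m" "k2 \<le> m div B" for k1 k2
  proof -
    have "(m - k1*B - s) - (m - k2*B - s) = (k2 - k1) * B"
      using that by (simp add: diff_mult_distrib)
    then have "A dvd (k2 - k1) * B" using that dvd_diff_nat by metis
    then have "A dvd (k2 - k1)" using cop
      by (simp add: coprime_dvd_mult_left_iff)
    moreover have "k2 - k1 < A" using that mb by linarith
    ultimately have "k2 - k1 = 0" by (metis dvd_imp_le not_gr_zero not_less)
    then show ?thesis using that by simp
  qed
  show ?thesis
  proof (cases "k1 \<le> k2")
    case True then show ?thesis using main d l k by blast
  next
    case False then show ?thesis using main[of k2 k1] d l k by simp
  qed
qed

lemma sum01:
  fixes N :: nat
  assumes "\<And>k1 k2. k1 \<le> N \<Longrightarrow> k2 \<le> N \<Longrightarrow> P k1 \<Longrightarrow> P k2 \<Longrightarrow> k1 = k2"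
  shows "0 \<le> (\<Sum>k\<le>N. if P k then 1 else 0 :: int) \<and> (\<Sum>k\<le>N. if P k then 1 else 0 :: int) \<le> 1"
proof -
  have "(\<Sum>k\<le>N. if P k then 1 else 0 :: int) = of_nat (card {k\<in>{..N}. P k})"
    using sum.inter_filter[of "{..N}" "\<lambda>_. 1::int" P] by simp
  moreover have "card {k\<in>{..N}. P k} \<le> 1"
    using assms by (auto simp: card_le_Suc0_iff_eq)
  ultimately show ?thesis by simp
qed


lemma iso: "(x::complex) - c = y \<Longrightarrow> c = x - y" by auto

lemma binary_coeff:
  fixes U :: "complex poly" and A B :: nat
  assumes A: "A > 0" and B: "B > 0" and cop: "coprime A B"
    and eq: "U * (monom 1 B - 1) = (\<Sum>i<B. monom 1 (A*i)) * (monom 1 1 - 1)"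
    and m: "m < A*B"
  shows "norm (coeff U m) \<le> 1"
proof -
  define \<gamma> where "\<gamma> t = (if A dvd t \<and> t < A*B then 1 else 0 :: int)" for t
  define \<delta> where "\<delta> t = \<gamma> t - (if 1 \<le> t then \<gamma> (t-1) else 0)" for t
  let ?G = "(\<Sum>i<B. monom (1::complex) (A*i))"
  have cG: "coeff ?G t = of_int (\<gamma> t)" for t
    using coeffG[OF A, of B t] by (simp add: \<gamma>_def)
  have rec: "coeff U m = (if B \<le> m then coeff U (m-B) else 0) + of_int (\<delta> m)" for m
  proof -
    have "coeff (U * (monom 1 B - 1)) m = (if B \<le> m then coeff U (m-B) else 0) - coeff U m"
      by (simp add: right_diff_distrib mult.commute[of U] coeff_monom_mult)
    moreover have "coeff (?G * (monom 1 1 - 1)) m = (if 1 \<le> m then coeff ?G (m-1) else 0) - coeff ?G m"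
      by (simp add: right_diff_distrib mult.commute[of ?G] coeff_monom_mult)
    ultimately have "(if B \<le> m then coeff U (m-B) else 0) - coeff U m =
        (if 1 \<le> m then of_int (\<gamma> (m-1)) else 0) - of_int (\<gamma> m)"
      using eq cG by simp
    then have "coeff U m = (if B \<le> m then coeff U (m-B) else 0) -
        ((if 1 \<le> m then of_int (\<gamma> (m-1)) else 0) - of_int (\<gamma> m))"
      by (rule iso)
    then show ?thesis by (simp add: \<delta>_def)
  qed
  have form: "coeff U m = of_int (\<Sum>k\<le>m div B. \<delta> (m - k*B))" for m
  proof (induction m rule: less_induct)
    case (less m)
    show ?case
    proof (cases "B \<le> m")
      case False
      then show ?thesis using rec[of m] by simp
    next
      case True
      have md: "m div B = Suc ((m - B) div B)" using True B
        by (simp add: le_div_geq)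
      have "(\<Sum>k\<le>m div B. \<delta> (m - k*B)) = \<delta> m + (\<Sum>k\<le>(m-B) div B. \<delta> (m - B - k*B))"
        unfolding md sum.atMost_Suc_shift by (simp add: diff_diff_add add.commute)
      moreover have "coeff U (m-B) = of_int (\<Sum>k\<le>(m-B) div B. \<delta> (m - B - k*B))"
        using less.IH[of "m-B"] True B by simp
      ultimately show ?thesis using rec[of m] True by simp
    qed
  qed
  define P1 where "P1 k = (A dvd (m - k*B - 0) \<and> k*B + 0 \<le> m)" for k
  define P2 where "P2 k = (A dvd (m - k*B - 1) \<and> k*B + 1 \<le> m)" for k
  have split: "(\<Sum>k\<le>m div B. \<delta> (m - k*B)) =
      (\<Sum>k\<le>m div B. if P1 k then 1 else 0) - (\<Sum>k\<le>m div B. if P2 k then 1 else 0)"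
    unfolding sum_subtractf[symmetric]
  proof (rule sum.cong)
    fix k assume "k \<in> {..m div B}"
    then have kb: "k * B \<le> m" using B
      by (metis atMost_iff div_times_less_eq_dividend le_trans mult_le_mono1)
    show "\<delta> (m - k*B) = (if P1 k then 1 else 0) - (if P2 k then 1 else 0)"
    proof -
      have h1: "\<gamma> (m - k*B) = (if P1 k then 1 else 0)"
        unfolding \<gamma>_def P1_def using kb m by simp
      have h2: "(if 1 \<le> m - k*B then \<gamma> (m - k*B - 1) else 0) = (if P2 k then 1 else 0)"
      proof (cases "1 \<le> m - k*B")
        case True
        then have "k*B + 1 \<le> m" by simp
        then show ?thesis unfolding \<gamma>_def P2_def using m True by simp
      next
        case False
        then show ?thesis unfolding P2_def by simp
      qed
      show ?thesis unfolding \<delta>_def h1 h2 ..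
    qed
  qed simp
  have b1: "0 \<le> (\<Sum>k\<le>m div B. if P1 k then 1 else 0 :: int) \<and> (\<Sum>k\<le>m div B. if P1 k then 1 else 0 :: int) \<le> 1"
    by (rule sum01) (unfold P1_def, elim conjE, rule uniq_k[OF cop B m], assumption+)
  have b2: "0 \<le> (\<Sum>k\<le>m div B. if P2 k then 1 else 0 :: int) \<and> (\<Sum>k\<le>m div B. if P2 k then 1 else 0 :: int) \<le> 1"
    by (rule sum01) (unfold P2_def, elim conjE, rule uniq_k[OF cop B m], assumption+)
  have "coeff U m = of_int ((\<Sum>k\<le>m div B. if P1 k then 1 else 0) - (\<Sum>k\<le>m div B. if P2 k then 1 else 0))"
    using form[of m] split by simp
  moreover have "\<bar>(\<Sum>k\<le>m div B. if P1 k then 1 else 0) - (\<Sum>k\<le>m div B. if P2 k then 1 else (0::int))\<bar> \<le> 1"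
    using b1 b2 by linarith
  ultimately show ?thesis by (simp only: norm_of_int)
qed


lemma UC_eq:
  assumes n: "n > 0"
  shows "unitary_cyclotomic n =
    (\<Prod>j\<in>{j\<in>{1..n}. \<forall>p\<in>prime_factors n. \<not> p ^ multiplicity p n dvd j}. lin n j)"
  unfolding unitary_cyclotomic_def om_def using ugcd_char[OF n] by simp

lemma height_one:
  assumes "\<And>i. norm (coeff f i) \<le> 1" "lead_coeff f = 1"
  shows "height f = 1"
  unfolding height_def
proof (rule Max_eqI)
  show "finite {norm (coeff f i) |i. i \<le> degree f}" by simp
  show "y \<le> 1" if "y \<in> {norm (coeff f i) |i. i \<le> degree f}" for y
    using that assms by auto
  show "1 \<in> {norm (coeff f i) |i. i \<le> degree f}" using assms(2) by force
qed

lemma lead_lin: "lead_coeff (\<Prod>j\<in>S. lin n j) = 1"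
  by (simp add: lead_coeff_prod)

lemma deg_lin: "finite S \<Longrightarrow> degree (\<Prod>j\<in>S. lin n j) = card S"
  by (subst degree_prod_eq_sum_degree) auto

lemma pf_prod:
  assumes "finite P" "\<forall>p\<in>P. prime (p::nat)"
  shows "prime_factors (\<Prod>P) = P"
proof -
  have pos: "\<Prod>P > 0" using assms by (simp add: prime_gt_0_nat prod_pos)
  show ?thesis
  proof safe
    fix p assume "p \<in> prime_factors (\<Prod>P)"
    then have pr: "prime p" and d: "p dvd \<Prod>P" by (auto simp: in_prime_factors_iff)
    then obtain q where "q \<in> P" "p dvd q" using prime_dvd_prod_iff[OF assms(1) pr, of id] by auto
    then show "p \<in> P" using assms pr by (metis primes_dvd_imp_eq)
  next
    fix p assume "p \<in> P"
    then show "p \<in> prime_factors (\<Prod>P)" using assms pos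
      by (auto simp: in_prime_factors_iff dvd_prod_eqI)
  qed
qed

lemma XA_nz: "A > 0 \<Longrightarrow> (monom 1 A - 1 :: complex poly) \<noteq> 0"
proof
  assume "A > 0" "(monom 1 A - 1 :: complex poly) = 0"
  then have "coeff (monom 1 A - 1 :: complex poly) A = 0" by simp
  then show False using \<open>A > 0\<close> by (simp add: coeff_monom)
qed


lemma case_one: "height (unitary_cyclotomic 1) = 1"
proof -
  have "unitary_cyclotomic 1 = lin 1 1"
    using UC_eq[of 1] by simp
  also have "\<dots> = [:-1,1:]" using om_self[of 1] by simp
  finally have U: "unitary_cyclotomic 1 = [:-1,1:]" .
  show ?thesis unfolding U
    by (rule height_one) (auto simp: coeff_pCons split: nat.splits)
qed

lemma case_pp:
  assumes n: "n > 0" and P: "prime_factors n = {p}"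
  shows "height (unitary_cyclotomic n) = 1"
proof -
  have nA: "n = p ^ multiplicity p n" using prime_factorization_nat[OF n] P by simp
  let ?S = "{j\<in>{1..n}. \<not> n dvd j}"
  have U: "unitary_cyclotomic n = (\<Prod>j\<in>?S. lin n j)"
    using UC_eq[OF n] P nA by simp
  have S: "?S = {1..n} - {n}" using n by (auto dest: dvd_imp_le)
  have "(\<Prod>j\<in>{1..n}. lin n j) = lin n n * (\<Prod>j\<in>?S. lin n j)"
    unfolding S using n by (intro prod.remove) auto
  moreover have "lin n n = monom 1 1 - 1" using om_self[OF n] lin1 by simp
  ultimately have "monom 1 n - 1 = (monom 1 1 - 1) * unitary_cyclotomic n"
    using root_prod[OF n] U by simp
  moreover have "(monom 1 1 - 1) * (\<Sum>i<n. monom 1 (1*i)) = (monom 1 (1*n) - 1 :: complex poly)"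
    by (rule geom)
  ultimately have "(monom 1 1 - 1) * unitary_cyclotomic n = (monom 1 1 - 1) * (\<Sum>i<n. monom 1 (1*i))"
    by (simp only: mult_1)
  then have UG: "unitary_cyclotomic n = (\<Sum>i<n. monom 1 (1*i))"
    using XA_nz[of 1] by simp
  show ?thesis
  proof (rule height_one)
    show "norm (coeff (unitary_cyclotomic n) i) \<le> 1" for i
      unfolding UG using coeffG[of 1 n i] by simp
    show "lead_coeff (unitary_cyclotomic n) = 1" unfolding U by (rule lead_lin)
  qed
qed


lemma case_two:
  assumes n: "n > 0" and P: "prime_factors n = {p, q}" and pq: "p \<noteq> q"
  shows "height (unitary_cyclotomic n) = 1"
proof -
  define A where "A = p ^ multiplicity p n"
  define B where "B = q ^ multiplicity q n"
  have pp: "prime p" "prime q" using P by (auto simp: in_prime_factors_iff)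
  have nAB: "n = A * B" using prime_factorization_nat[OF n] P pq by (simp add: A_def B_def)
  have A0: "A > 0" "B > 0" using nAB n by auto
  have cop: "coprime A B" unfolding A_def B_def
    using pp pq by (simp add: primes_coprime coprime_power_left_iff coprime_power_right_iff)
  let ?f = "lin n"
  define J where "J = {1..n}"
  define S where "S = {j\<in>J. \<not> A dvd j \<and> \<not> B dvd j}"
  define JA where "JA = {j\<in>J. A dvd j}"
  define JB where "JB = {j\<in>J. B dvd j}"
  have U: "unitary_cyclotomic n = (\<Prod>j\<in>S. ?f j)"
    using UC_eq[OF n] P unfolding S_def J_def A_def B_def by simp
  have fin: "finite S" "finite JA" "finite JB" unfolding S_def JA_def JB_def J_def by auto
  have JS: "J = S \<union> (JA \<union> JB)" "S \<inter> (JA \<union> JB) = {}"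
    unfolding S_def JA_def JB_def by auto
  have JAB: "JA \<inter> JB = {n}"
  proof safe
    fix j assume "j \<in> JA" "j \<in> JB"
    then have "A * B dvd j" "j \<in> J" using cop unfolding JA_def JB_def
      by (auto intro: divides_mult)
    then show "j = n" unfolding J_def using nAB by (auto dest: dvd_imp_le)
  qed (use n nAB in \<open>auto simp: JA_def JB_def J_def\<close>)
  have pJ: "(\<Prod>j\<in>J. ?f j) = (\<Prod>j\<in>S. ?f j) * (\<Prod>j\<in>JA \<union> JB. ?f j)"
    unfolding JS(1) using fin JS(2) by (intro prod.union_disjoint) auto
  have pU: "(\<Prod>j\<in>JA \<union> JB. ?f j) * (\<Prod>j\<in>JA \<inter> JB. ?f j) = (\<Prod>j\<in>JA. ?f j) * (\<Prod>j\<in>JB. ?f j)"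
    using fin by (intro prod.union_inter) auto
  have p1: "(\<Prod>j\<in>J. ?f j) = monom 1 n - 1" unfolding J_def using root_prod[OF n] by simp
  have p2: "(\<Prod>j\<in>JA. ?f j) = monom 1 B - 1" unfolding JA_def J_def
    using sub_prod[of A B n] nAB A0 by simp
  have p3: "(\<Prod>j\<in>JB. ?f j) = monom 1 A - 1" unfolding JB_def J_def
    using sub_prod[of B A n] nAB A0 by (simp add: mult.commute)
  have p4: "(\<Prod>j\<in>JA \<inter> JB. ?f j) = monom 1 1 - 1"
    unfolding JAB using om_self[OF n] lin1 by simp
  let ?U = "unitary_cyclotomic n"
  let ?G = "(\<Sum>i<B. monom (1::complex) (A*i))"
  have "(monom 1 n - 1) * (monom 1 1 - 1) = (\<Prod>j\<in>S. ?f j) * ((\<Prod>j\<in>JA \<union> JB. ?f j) * (\<Prod>j\<in>JA \<inter> JB. ?f j))"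
    by (simp only: p1[symmetric] p4[symmetric] pJ mult.assoc)
  also have "\<dots> = ?U * ((monom 1 B - 1) * (monom 1 A - 1))"
    by (simp only: pU p2 p3 U)
  finally have e1: "(monom 1 n - 1) * (monom 1 1 - 1) = ?U * ((monom 1 B - 1) * (monom 1 A - 1))" .
  have "monom 1 n - 1 = (monom 1 A - 1) * ?G" using geom[of A B] nAB by simp
  with e1 have e2: "((monom 1 A - 1) * ?G) * (monom 1 1 - 1) = ?U * ((monom 1 B - 1) * (monom 1 A - 1))"
    by simp
  have "(monom 1 A - 1) * (?U * (monom 1 B - 1)) = (monom 1 A - 1) * (?G * (monom 1 1 - 1))"
    using e2 by (simp only: ac_simps)
  then have eq: "?U * (monom 1 B - 1) = ?G * (monom 1 1 - 1)"
    using XA_nz[OF A0(1)] by simp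
  have degU: "degree ?U < A * B"
  proof -
    have "degree ?U = card S" unfolding U using fin by (simp add: deg_lin)
    also have "card S \<le> card (J - {n})"
      by (rule card_mono) (auto simp: J_def S_def nAB)
    also have "\<dots> < A * B" using nAB n by (simp add: J_def)
    finally show ?thesis .
  qed
  show ?thesis
  proof (rule height_one)
    show "norm (coeff ?U i) \<le> 1" for i
    proof (cases "i < A * B")
      case True
      then show ?thesis using binary_coeff[OF A0 cop eq] by simp
    next
      case False
      then have "coeff ?U i = 0" using degU by (simp add: coeff_eq_0)
      then show ?thesis by simp
    qed
    show "lead_coeff ?U = 1" unfolding U by (rule lead_lin)
  qed
qed


theorem lemma5p4:
  fixes k n :: nat
  assumes "k > 0" and "squarefree k" and "card (prime_factors k) \<le> 2"
    and "n > 0" and "kappa n = k"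
  shows "height (unitary_cyclotomic n) = 1"
proof -
  have "prime_factors k = prime_factors n"
    using assms(5) pf_prod[of "prime_factors n"] unfolding kappa_def by auto
  then have c: "card (prime_factors n) \<le> 2" using assms(3) by simp
  have fin: "finite (prime_factors n)" by simp
  consider "card (prime_factors n) = 0" | "card (prime_factors n) = 1" | "card (prime_factors n) = 2"
    using c by linarith
  then show ?thesis
  proof cases
    case 1
    then have "prime_factors n = {}" using fin by simp
    then have "n = 1" using prime_factorization_nat[OF assms(4)] by simp
    then show ?thesis using case_one by simp
  next
    case 2
    then obtain p where "prime_factors n = {p}" by (auto simp: card_Suc_eq)
    then show ?thesis using case_pp[OF assms(4)] by blast
  next
    case 3
    then obtain p q where "prime_factors n = {p, q}" "p \<noteq> q" by (auto simp: card_2_iff)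
    then show ?thesis using case_two[OF assms(4)] by blast
  qed
qed

end
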